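(* Let $G$ be a finite simple graph and let $1\le k<\nu(G)$. If $I(G)^{[k]}$ is linearly related, then $I(G)^{[k+1]}$ is linearly related.
   Context: $G$ is a finite simple graph on vertex set $\{x_1,\ldots,x_n\}$ identified with the variables of $S=K[x_1,\ldots,x_n]$ ($K$ a field); edges are identified with degree-2 monomials. $I(G)^{[k]}$ (the $k$th squarefree power of the edge ideal) is generated by all products $e_1\cdots e_k$ over $k$-matchings $\{e_1,\ldots,e_k\}$ of $G$; it is generated in degree $2k$. $\nu(G)$ is the matching number. A graded ideal $I$ generated in a single degree $d$ is linearly related if its first syzygy module is generated by linear relations, i.e. $\dim_K\operatorname{Tor}_1^S(I,K)_j=0$ for all $j\neq d+1$. *)

theory Defs
  imports Main "HOL-Library.Poly_Mapping"
begin

(* Polynomial ring S = K[x_v : v vertex]: polynomials are finitely supported maps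
  from monomials (exponent vectors 'a <Rightarrow><^sub>0 nat) to coefficients in K. *)

type_synonym ('a, 'k) poly = "('a \<Rightarrow>\<^sub>0 nat) \<Rightarrow>\<^sub>0 'k"

definition simple_graph :: "'a set set \<Rightarrow> bool" where
  "simple_graph E \<longleftrightarrow> finite E \<and> (\<forall>e\<in>E. card e = 2)"

definition matching :: "'a set set \<Rightarrow> 'a set set \<Rightarrow> bool" where
  "matching E M \<longleftrightarrow> M \<subseteq> E \<and> (\<forall>e\<in>M. \<forall>f\<in>M. e \<noteq> f \<longrightarrow> e \<inter> f = {})"

definition matching_number :: "'a set set \<Rightarrow> nat" where
  "matching_number E = Max {card M | M. matching E M}"

(* Exponent vector of the squarefree monomial prod_{x in A} x. *)
definition vexp :: "'a set \<Rightarrow> ('a \<Rightarrow>\<^sub>0 nat)" where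
  "vexp A = (\<Sum>x\<in>A. Poly_Mapping.single x 1)"

definition monom :: "('a \<Rightarrow>\<^sub>0 nat) \<Rightarrow> ('a, 'k::comm_ring_1) poly" where
  "monom m = Poly_Mapping.single m 1"

(* Exponent vectors of the generators e_1 <cdots> e_k of I(G)^[k], over all k-matchings. *)
definition sqf_power_gens :: "'a set set \<Rightarrow> nat \<Rightarrow> ('a \<Rightarrow>\<^sub>0 nat) set" where
  "sqf_power_gens E k = {(\<Sum>e\<in>M. vexp e) | M. matching E M \<and> card M = k}"

definition mdeg :: "('a \<Rightarrow>\<^sub>0 nat) \<Rightarrow> nat" where
  "mdeg m = (\<Sum>x\<in>Poly_Mapping.keys m. Poly_Mapping.lookup m x)"

definition syzygies :: "('a \<Rightarrow>\<^sub>0 nat) set \<Rightarrow> (('a \<Rightarrow>\<^sub>0 nat) \<Rightarrow> ('a, 'k::field) poly) set" where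
  "syzygies U = {\<sigma>. (\<forall>u. u \<notin> U \<longrightarrow> \<sigma> u = 0) \<and> (\<Sum>u\<in>U. \<sigma> u * monom u) = 0}"

definition linear_syzygies :: "('a \<Rightarrow>\<^sub>0 nat) set \<Rightarrow> (('a \<Rightarrow>\<^sub>0 nat) \<Rightarrow> ('a, 'k::field) poly) set" where
  "linear_syzygies U = {\<sigma> \<in> syzygies U. \<forall>u. \<forall>m\<in>Poly_Mapping.keys (\<sigma> u). mdeg m = 1}"

(* The ideal generated by the monomials U (all of the same degree d, hence a minimal
  generating set) is linearly related: its first syzygy module is generated, as an S-module,
  by linear relations. *)
definition linearly_related :: "('a \<Rightarrow>\<^sub>0 nat) set \<Rightarrow> 'k::field itself \<Rightarrow> bool" where
  "linearly_related U K \<longleftrightarrow>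
     (\<forall>\<sigma> \<in> (syzygies U :: (('a \<Rightarrow>\<^sub>0 nat) \<Rightarrow> ('a, 'k) poly) set).
        \<exists>n (c :: nat \<Rightarrow> ('a, 'k) poly) \<tau>.
          (\<forall>i<n. \<tau> i \<in> linear_syzygies U) \<and> (\<forall>u. \<sigma> u = (\<Sum>i<n. c i * \<tau> i u)))"

end

theory Submission
  imports Defs
begin


definition mle :: "('a \<Rightarrow>\<^sub>0 nat) \<Rightarrow> ('a \<Rightarrow>\<^sub>0 nat) \<Rightarrow> bool" where
  "mle m n \<longleftrightarrow> (\<forall>x. Poly_Mapping.lookup m x \<le> Poly_Mapping.lookup n x)"

lemma mle_trans: "mle a b \<Longrightarrow> mle b c \<Longrightarrow> mle a c"
  unfolding mle_def using order_trans by blast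

lemma mle_diff_add: "mle m n \<Longrightarrow> (n - m) + m = n"
  by (rule poly_mapping_eqI) (simp add: mle_def lookup_add lookup_minus)

lemma mle_add: "mle m (q + m)"
  by (simp add: mle_def lookup_add)

lemma add_diff_cancel_pm: "((q::'a \<Rightarrow>\<^sub>0 nat) + m) - m = q"
  by (rule poly_mapping_eqI) (simp add: lookup_add lookup_minus)

lemma poly_expand: "(p::('a,'k::comm_ring_1) poly) = (\<Sum>m\<in>Poly_Mapping.keys p. Poly_Mapping.single m (Poly_Mapping.lookup p m))"
proof (rule poly_mapping_eqI)
  fix x
  have "Poly_Mapping.lookup (\<Sum>m\<in>Poly_Mapping.keys p. Poly_Mapping.single m (Poly_Mapping.lookup p m)) x
     = (\<Sum>m\<in>Poly_Mapping.keys p. (if m = x then Poly_Mapping.lookup p m else 0))"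
    by (simp add: lookup_sum lookup_single when_def)
  also have "\<dots> = Poly_Mapping.lookup p x"
    by (simp add: sum.delta in_keys_iff)
  finally show "Poly_Mapping.lookup p x = Poly_Mapping.lookup (\<Sum>m\<in>Poly_Mapping.keys p. Poly_Mapping.single m (Poly_Mapping.lookup p m)) x" by simp
qed

lemma lookup_single_mult:
  "Poly_Mapping.lookup (Poly_Mapping.single m s * (p::('a,'k::comm_ring_1) poly)) x
   = (if mle m x then s * Poly_Mapping.lookup p (x - m) else 0)"
proof -
  have "Poly_Mapping.single m s * p = (\<Sum>q\<in>Poly_Mapping.keys p. Poly_Mapping.single m s * Poly_Mapping.single q (Poly_Mapping.lookup p q))"
    by (subst poly_expand[of p]) (simp add: sum_distrib_left)
  also have "\<dots> = (\<Sum>q\<in>Poly_Mapping.keys p. Poly_Mapping.single (m + q) (s * Poly_Mapping.lookup p q))"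
    by (simp add: mult_single)
  finally have e: "Poly_Mapping.lookup (Poly_Mapping.single m s * p) x =
      (\<Sum>q\<in>Poly_Mapping.keys p. (if m + q = x then s * Poly_Mapping.lookup p q else 0))"
    by (simp add: lookup_sum lookup_single when_def)
  show ?thesis
  proof (cases "mle m x")
    case True
    have "\<And>q. (m + q = x) = (q = x - m)"
      using True mle_diff_add[OF True] add_diff_cancel_pm[of _ m]
      by (metis add.commute)
    then show ?thesis using True e by (simp add: sum.delta in_keys_iff)
  next
    case False
    have "\<And>q. m + q \<noteq> x" using False mle_add by (metis add.commute)
    then show ?thesis using False e by simp
  qed
qed

lemma lookup_mult_single:
  "Poly_Mapping.lookup ((p::('a,'k::comm_ring_1) poly) * Poly_Mapping.single m 1) x
   = (if mle m x then Poly_Mapping.lookup p (x - m) else 0)"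
  by (simp add: mult.commute[of p] lookup_single_mult)

lemma monom_mult: "(monom a :: ('a,'k::comm_ring_1) poly) * monom b = monom (a + b)"
  by (simp add: monom_def mult_single)

lemma mdeg_univ: "mdeg (m::('a::finite \<Rightarrow>\<^sub>0 nat)) = (\<Sum>x\<in>UNIV. Poly_Mapping.lookup m x)"
  unfolding mdeg_def by (rule sum.mono_neutral_left) (auto simp: in_keys_iff)

lemma mdeg_add: "mdeg ((m::('a::finite \<Rightarrow>\<^sub>0 nat)) + n) = mdeg m + mdeg n"
  by (simp add: mdeg_univ lookup_add sum.distrib)

lemma mdeg_mono: "mle m n \<Longrightarrow> mdeg (m::('a::finite \<Rightarrow>\<^sub>0 nat)) \<le> mdeg n"
  unfolding mdeg_univ mle_def by (rule sum_mono) auto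



definition LinC :: "('a \<Rightarrow>\<^sub>0 nat) set \<Rightarrow> (('a \<Rightarrow>\<^sub>0 nat) \<Rightarrow> ('a, 'k::field) poly) set" where
  "LinC U = {\<rho>. \<exists>n (c :: nat \<Rightarrow> (_, 'k) poly) \<tau>. (\<forall>i<n. \<tau> i \<in> linear_syzygies U) \<and> (\<forall>u. \<rho> u = (\<Sum>i<n. c i * \<tau> i u))}"

lemma lr_iff: "linearly_related U TYPE('k::field) \<longleftrightarrow>
   (syzygies U :: (('a \<Rightarrow>\<^sub>0 nat) \<Rightarrow> ('a, 'k) poly) set) \<subseteq> LinC U"
  unfolding linearly_related_def LinC_def by blast

lemma sum_split_nat: "(\<Sum>i<a+(b::nat). f i) = (\<Sum>i<a. f i) + (\<Sum>i<b. f (a+i))"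
  by (induction b) (simp_all add: add.assoc)

lemma LinC_lin: "\<tau> \<in> linear_syzygies U \<Longrightarrow> \<tau> \<in> LinC U"
  unfolding LinC_def
  by (rule CollectI, rule exI[of _ 1], rule exI[of _ "\<lambda>_. 1"], rule exI[of _ "\<lambda>_. \<tau>"]) simp

lemma LinC_zero: "(\<lambda>_. 0) \<in> LinC U"
  unfolding LinC_def by (rule CollectI, rule exI[of _ 0]) simp

lemma LinC_add: assumes "\<rho>1 \<in> LinC U" "\<rho>2 \<in> LinC U" shows "(\<lambda>u. \<rho>1 u + \<rho>2 u) \<in> LinC U"
proof -
  obtain n1 :: nat and c1 \<tau>1 where 1: "\<forall>i<n1. \<tau>1 i \<in> linear_syzygies U" "\<forall>u. \<rho>1 u = (\<Sum>i<n1. c1 i * \<tau>1 i u)"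
    using assms(1) unfolding LinC_def mem_Collect_eq by blast
  obtain n2 :: nat and c2 \<tau>2 where 2: "\<forall>i<n2. \<tau>2 i \<in> linear_syzygies U" "\<forall>u. \<rho>2 u = (\<Sum>i<n2. c2 i * \<tau>2 i u)"
    using assms(2) unfolding LinC_def mem_Collect_eq by blast
  define c where "c i = (if i < n1 then c1 i else c2 (i - n1))" for i
  define \<tau> where "\<tau> i = (if i < n1 then \<tau>1 i else \<tau>2 (i - n1))" for i
  have "\<forall>i<n1+n2. \<tau> i \<in> linear_syzygies U" using 1 2 by (auto simp: \<tau>_def)
  moreover have "\<forall>u. \<rho>1 u + \<rho>2 u = (\<Sum>i<n1+n2. c i * \<tau> i u)"
    proof
    fix u
    have "(\<Sum>i<n1. c i * \<tau> i u) = (\<Sum>i<n1. c1 i * \<tau>1 i u)"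
      by (rule sum.cong) (auto simp: c_def \<tau>_def)
    then show "\<rho>1 u + \<rho>2 u = (\<Sum>i<n1+n2. c i * \<tau> i u)"
      unfolding sum_split_nat using 1 2 by (simp add: c_def \<tau>_def)
  qed
  ultimately show ?thesis unfolding LinC_def
    by (intro CollectI exI[of _ "n1+n2"] exI[of _ c] exI[of _ \<tau>] conjI) auto
qed

lemma LinC_mult: assumes "\<rho> \<in> LinC U" shows "(\<lambda>u. p * \<rho> u) \<in> LinC U"
proof -
  obtain n :: nat and c \<tau> where 1: "\<forall>i<n. \<tau> i \<in> linear_syzygies U" "\<forall>u. \<rho> u = (\<Sum>i<n. c i * \<tau> i u)"
    using assms unfolding LinC_def mem_Collect_eq by blast
  have "\<forall>u. p * \<rho> u = (\<Sum>i<n. (p * c i) * \<tau> i u)"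
    using 1(2) by (simp add: sum_distrib_left mult.assoc)
  then show ?thesis using 1(1) unfolding LinC_def
    by (intro CollectI exI[of _ n] exI[of _ "\<lambda>i. p * c i"] exI[of _ \<tau>] conjI) auto
qed

lemma LinC_sum: assumes "finite A" "\<And>a. a \<in> A \<Longrightarrow> \<rho> a \<in> LinC U"
  shows "(\<lambda>u. \<Sum>a\<in>A. \<rho> a u) \<in> LinC U"
  using assms
proof (induction A rule: finite_induct)
  case empty then show ?case using LinC_zero by simp
next
  case (insert x F)
  then show ?case using LinC_add[of "\<rho> x" U "\<lambda>u. \<Sum>a\<in>F. \<rho> a u"] by simp
qed

lemma LinC_diff: assumes "\<rho>1 \<in> LinC U" "\<rho>2 \<in> LinC U" shows "(\<lambda>u. \<rho>1 u - \<rho>2 u) \<in> LinC U"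
  using LinC_add[OF assms(1) LinC_mult[OF assms(2), of "-1"]] by simp

lemma LinC_cong: "\<rho> \<in> LinC U \<Longrightarrow> (\<And>u. \<rho> u = \<rho>' u) \<Longrightarrow> \<rho>' \<in> LinC U"
proof -
  assume "\<rho> \<in> LinC U" "\<And>u. \<rho> u = \<rho>' u"
  then have "\<rho> = \<rho>'" by auto
  then show ?thesis using \<open>\<rho> \<in> LinC U\<close> by simp
qed



definition adj :: "('a \<Rightarrow>\<^sub>0 nat) set \<Rightarrow> nat \<Rightarrow> ('a \<Rightarrow>\<^sub>0 nat) \<Rightarrow> ('a \<Rightarrow>\<^sub>0 nat) \<Rightarrow> ('a \<Rightarrow>\<^sub>0 nat) \<Rightarrow> bool" where
  "adj U d a w w' \<longleftrightarrow> w \<in> U \<and> w' \<in> U \<and> mle w a \<and> mle w' a \<and>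
     (w = w' \<or> (\<exists>b. mle b a \<and> mdeg b = Suc d \<and> mle w b \<and> mle w' b))"

lemma diff_chain: assumes "mle y b" "mle b c" shows "(c - b) + (b - y) = (c - (y::'a \<Rightarrow>\<^sub>0 nat))"
proof (rule poly_mapping_eqI)
  fix k
  have "Poly_Mapping.lookup y k \<le> Poly_Mapping.lookup b k" "Poly_Mapping.lookup b k \<le> Poly_Mapping.lookup c k"
    using assms unfolding mle_def by auto
  then show "Poly_Mapping.lookup (c - b + (b - y)) k = Poly_Mapping.lookup (c - y) k"
    by (simp add: lookup_add lookup_minus)
qed

lemma keys_monom: "Poly_Mapping.keys (monom m :: ('a,'k::field) poly) = {m}"
  by (simp add: monom_def)

lemma lin_step:
  fixes U :: "('a::finite \<Rightarrow>\<^sub>0 nat) set"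
  assumes fin: "finite U" and uv: "u \<in> U" "v \<in> U" "u \<noteq> v"
    and deg: "mdeg u = d" "mdeg v = d" and b: "mle u b" "mle v b" "mdeg b = Suc d"
  shows "(\<lambda>w. (if w = u then monom (b - u) else 0) - (if w = v then monom (b - v) else 0))
           \<in> (linear_syzygies U :: (_ \<Rightarrow> ('a,'k::field) poly) set)"
proof -
  let ?\<tau> = "(\<lambda>w. (if w = u then monom (b - u) else 0) - (if w = v then monom (b - v) else 0))
     :: _ \<Rightarrow> ('a,'k) poly"
  have z: "\<forall>w. w \<notin> U \<longrightarrow> ?\<tau> w = 0" using uv by auto
  have "(\<Sum>w\<in>U. ?\<tau> w * monom w) =
        (\<Sum>w\<in>U. (if w = u then monom (b - u) * monom w else 0)) - (\<Sum>w\<in>U. (if w = v then monom (b - v) * monom w else 0))"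
    by (subst sum_subtractf[symmetric], rule sum.cong) auto
  also have "\<dots> = monom ((b - u) + u) - monom ((b - v) + v)"
    using fin uv by (simp add: sum.delta monom_mult)
  also have "\<dots> = 0" using b by (simp add: mle_diff_add)
  finally have s: "(\<Sum>w\<in>U. ?\<tau> w * monom w) = 0" .
  have d1: "mdeg (b - u) = 1" "mdeg (b - v) = 1"
    using mdeg_add[of "b - u" u] mdeg_add[of "b - v" v] b deg by (simp_all add: mle_diff_add)
  have "\<forall>w. \<forall>m\<in>Poly_Mapping.keys (?\<tau> w). mdeg m = 1"
    using uv d1 by (auto simp: keys_monom)
  then show ?thesis using z s unfolding linear_syzygies_def syzygies_def by blast
qed

definition Dv :: "('a \<Rightarrow>\<^sub>0 nat) \<Rightarrow> ('a \<Rightarrow>\<^sub>0 nat) \<Rightarrow> ('a \<Rightarrow>\<^sub>0 nat) \<Rightarrow> ('a \<Rightarrow>\<^sub>0 nat) \<Rightarrow> ('a,'k::field) poly" where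
  "Dv c u v = (\<lambda>w. (if w = u then monom (c - u) else 0) - (if w = v then monom (c - v) else 0))"

lemma conn_diff:
  fixes U :: "('a::finite \<Rightarrow>\<^sub>0 nat) set"
  assumes fin: "finite U" and deg: "\<forall>u\<in>U. mdeg u = d"
    and path: "(adj U d c)\<^sup>*\<^sup>* u v"
  shows "(Dv c u v :: _ \<Rightarrow> ('a,'k::field) poly) \<in> LinC U"
  using path
proof (induction rule: rtranclp_induct)
  case base
  show ?case by (rule LinC_cong[OF LinC_zero]) (simp add: Dv_def)
next
  case (step y z)
  have yz: "(Dv c y z :: _ \<Rightarrow> ('a,'k) poly) \<in> LinC U"
  proof (cases "y = z")
    case True
    then show ?thesis by (intro LinC_cong[OF LinC_zero]) (simp add: Dv_def)
  next
    case False
    then obtain b where b: "mle b c" "mdeg b = Suc d" "mle y b" "mle z b" and yz: "y \<in> U" "z \<in> U"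
      using step(2) unfolding adj_def by blast
    have l: "(\<lambda>w. (if w = y then monom (b - y) else 0) - (if w = z then monom (b - z) else 0))
           \<in> (linear_syzygies U :: (_ \<Rightarrow> ('a,'k::field) poly) set)"
      by (rule lin_step) (use fin yz False deg b in auto)
    show ?thesis
    proof (rule LinC_cong[OF LinC_mult[OF LinC_lin[OF l], of "monom (c - b)"]])
      fix w
      show "monom (c - b) * ((if w = y then monom (b - y) else 0) - (if w = z then monom (b - z) else 0))
            = Dv c y z w"
        using b by (simp add: Dv_def right_diff_distrib monom_mult diff_chain)
    qed
  qed
  show ?case
    by (rule LinC_cong[OF LinC_add[OF step(3) yz]]) (simp add: Dv_def)
qed



lemma syz_at:
  assumes fin: "finite U" and s: "(\<Sum>u\<in>U. \<sigma> u * monom u) = (0::('a,'k::field) poly)"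
  shows "(\<Sum>u\<in>U. (if mle u c then Poly_Mapping.lookup (\<sigma> u) (c - u) else 0)) = 0"
proof -
  have "Poly_Mapping.lookup (\<Sum>u\<in>U. \<sigma> u * monom u) c = 0" using s by simp
  then show ?thesis by (simp add: lookup_sum monom_def lookup_mult_single)
qed

lemma suff:
  fixes U :: "('a::finite \<Rightarrow>\<^sub>0 nat) set"
  assumes fin: "finite U" and deg: "\<forall>u\<in>U. mdeg u = d"
    and conn: "\<And>u v c. u \<in> U \<Longrightarrow> v \<in> U \<Longrightarrow> mle u c \<Longrightarrow> mle v c \<Longrightarrow> (adj U d c)\<^sup>*\<^sup>* u v"
  shows "(syzygies U :: (_ \<Rightarrow> ('a,'k::field) poly) set) \<subseteq> LinC U"
proof
  fix \<sigma> :: "_ \<Rightarrow> ('a,'k) poly"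
  assume "\<sigma> \<in> syzygies U"
  then have z: "\<And>u. u \<notin> U \<Longrightarrow> \<sigma> u = 0" and s: "(\<Sum>u\<in>U. \<sigma> u * monom u) = 0"
    unfolding syzygies_def by auto
  define Cs where "Cs = (\<Union>u\<in>U. (\<lambda>m. m + u) ` Poly_Mapping.keys (\<sigma> u))"
  have finCs: "finite Cs" unfolding Cs_def using fin by auto
  define \<alpha> where "\<alpha> c u = (if u \<in> U \<and> mle u c then Poly_Mapping.lookup (\<sigma> u) (c - u) else 0)" for c u
  define comp where "comp c = (\<lambda>u. Poly_Mapping.single (c - u) (\<alpha> c u))" for c
  have A: "\<sigma> u = (\<Sum>c\<in>Cs. comp c u)" for u
  proof (cases "u \<in> U")
    case False
    then show ?thesis by (simp add: z comp_def \<alpha>_def)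
  next
    case True
    define Ku where "Ku = (\<lambda>m. m + u) ` Poly_Mapping.keys (\<sigma> u)"
    have KuCs: "Ku \<subseteq> Cs" using True unfolding Ku_def Cs_def by auto
    have "(\<Sum>c\<in>Cs. comp c u) = (\<Sum>c\<in>Ku. comp c u)"
    proof (rule sum.mono_neutral_right[OF finCs KuCs], rule ballI)
      fix c assume c: "c \<in> Cs - Ku"
      show "comp c u = 0"
      proof (cases "mle u c")
        case True
        have "c - u \<notin> Poly_Mapping.keys (\<sigma> u)"
        proof
          assume "c - u \<in> Poly_Mapping.keys (\<sigma> u)"
          then have "(c - u) + u \<in> Ku" unfolding Ku_def by blast
          then show False using c mle_diff_add[OF True] by simp
        qed
        then show ?thesis by (simp add: comp_def \<alpha>_def in_keys_iff)
      qed (simp add: comp_def \<alpha>_def)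
    qed
    also have "\<dots> = (\<Sum>m\<in>Poly_Mapping.keys (\<sigma> u). comp (m + u) u)"
      unfolding Ku_def
      by (subst sum.reindex) (auto intro!: inj_onI simp: add_right_cancel)
    also have "\<dots> = (\<Sum>m\<in>Poly_Mapping.keys (\<sigma> u). Poly_Mapping.single m (Poly_Mapping.lookup (\<sigma> u) m))"
      using True by (simp add: comp_def \<alpha>_def mle_add add_diff_cancel_pm)
    also have "\<dots> = \<sigma> u" by (rule poly_expand[symmetric])
    finally show ?thesis by simp
  qed
  have B: "comp c \<in> LinC U" for c
  proof -
    define Uc where "Uc = {u\<in>U. mle u c}"
    have finUc: "finite Uc" using fin unfolding Uc_def by auto
    have sa: "(\<Sum>u\<in>Uc. \<alpha> c u) = 0"
    proof -
      have "(\<Sum>u\<in>Uc. \<alpha> c u) = (\<Sum>u\<in>U. \<alpha> c u)"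
        by (rule sum.mono_neutral_left) (auto simp: fin Uc_def \<alpha>_def)
      also have "\<dots> = (\<Sum>u\<in>U. (if mle u c then Poly_Mapping.lookup (\<sigma> u) (c - u) else 0))"
        by (rule sum.cong) (auto simp: \<alpha>_def)
      also have "\<dots> = 0" by (rule syz_at[OF fin s])
      finally show ?thesis .
    qed
    show ?thesis
    proof (cases "Uc = {}")
      case True
      then show ?thesis
        by (intro LinC_cong[OF LinC_zero]) (auto simp: comp_def \<alpha>_def Uc_def)
    next
      case False
      then obtain u0 where u0: "u0 \<in> Uc" by blast
      have D: "(Dv c u u0 :: _ \<Rightarrow> ('a,'k) poly) \<in> LinC U" if "u \<in> Uc" for u
        by (rule conn_diff[OF fin deg conn]) (use that u0 in \<open>auto simp: Uc_def\<close>)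
      have L: "(\<lambda>w. \<Sum>u\<in>Uc. Poly_Mapping.single 0 (\<alpha> c u) * Dv c u u0 w) \<in> LinC U"
        by (rule LinC_sum[OF finUc]) (rule LinC_mult[OF D])
      show ?thesis
      proof (rule LinC_cong[OF L])
        fix w
        have "(\<Sum>u\<in>Uc. Poly_Mapping.single 0 (\<alpha> c u) * Dv c u u0 w)
            = (\<Sum>u\<in>Uc. (if w = u then Poly_Mapping.single 0 (\<alpha> c u) * monom (c - u) else 0))
              - (\<Sum>u\<in>Uc. (if w = u0 then Poly_Mapping.single 0 (\<alpha> c u) * monom (c - u0) else 0))"
          by (subst sum_subtractf[symmetric], rule sum.cong) (auto simp: Dv_def right_diff_distrib)
        also have "\<dots> = (if w \<in> Uc then Poly_Mapping.single 0 (\<alpha> c w) * monom (c - w) else 0)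
              - (if w = u0 then (\<Sum>u\<in>Uc. Poly_Mapping.single 0 (\<alpha> c u)) * monom (c - u0) else 0)"
          using finUc by (simp add: sum.delta' sum_distrib_right)
        also have "(\<Sum>u\<in>Uc. Poly_Mapping.single 0 (\<alpha> c u)) = Poly_Mapping.single 0 (\<Sum>u\<in>Uc. \<alpha> c u)"
          by (induction Uc rule: infinite_finite_induct) (auto simp: single_add)
        also have "\<dots> = 0" using sa by simp
        finally show "(\<Sum>u\<in>Uc. Poly_Mapping.single 0 (\<alpha> c u) * Dv c u u0 w) = comp c w"
          by (auto simp: comp_def monom_def mult_single \<alpha>_def Uc_def)
      qed
    qed
  qed
  show "\<sigma> \<in> LinC U"
    by (rule LinC_cong[OF LinC_sum[OF finCs B]]) (simp add: A)
qed



lemma mle_diff_swap: assumes "mle w a" "mle m a"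
  shows "mle m (a - w) \<longleftrightarrow> mle w (a - (m::'a \<Rightarrow>\<^sub>0 nat))"
  using assms unfolding mle_def by (auto simp: lookup_minus) (metis le_diff_conv2 add.commute)+

lemma diff_diff_pm: "(a - w) - m = (a - m) - (w::'a \<Rightarrow>\<^sub>0 nat)"
  by (rule poly_mapping_eqI) (simp add: lookup_minus)

lemma mle_diff_le: "mle (a - w) (a::'a \<Rightarrow>\<^sub>0 nat)"
  by (simp add: mle_def lookup_minus)

lemma kill:
  fixes U :: "('a::finite \<Rightarrow>\<^sub>0 nat) set" and \<tau> :: "_ \<Rightarrow> ('a,'k::field) poly"
  assumes fin: "finite U" and deg: "\<forall>u\<in>U. mdeg u = d" and lin: "\<tau> \<in> linear_syzygies U"
    and CU: "C \<subseteq> U" and Ca: "\<forall>w\<in>C. mle w a"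
    and clos: "\<forall>w\<in>C. \<forall>w'. adj U d a w w' \<longrightarrow> w' \<in> C"
  shows "(\<Sum>w\<in>C. Poly_Mapping.lookup (p * \<tau> w) (a - w)) = 0"
proof -
  have finC: "finite C" using fin CU finite_subset by blast
  have s\<tau>: "(\<Sum>u\<in>U. \<tau> u * monom u) = 0" and k\<tau>: "\<And>u m. m \<in> Poly_Mapping.keys (\<tau> u) \<Longrightarrow> mdeg m = 1"
    using lin unfolding linear_syzygies_def syzygies_def by auto
  have inner: "(\<Sum>w\<in>C. (if mle m (a - w) then Poly_Mapping.lookup (\<tau> w) (a - w - m) else 0)) = 0" for m
  proof (cases "mle m a")
    case False
    have "\<not> mle m (a - w)" for w using False mle_trans[OF _ mle_diff_le] by blast
    then show ?thesis by simp
  next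
    case True
    define b where "b = a - m"
    have ba: "mle b a" unfolding b_def by (rule mle_diff_le)
    define g where "g w = (if mle w b then Poly_Mapping.lookup (\<tau> w) (b - w) else 0)" for w
    have fg: "(\<Sum>w\<in>C. (if mle m (a - w) then Poly_Mapping.lookup (\<tau> w) (a - w - m) else 0)) = (\<Sum>w\<in>C. g w)"
      by (rule sum.cong) (auto simp: g_def b_def mle_diff_swap[OF _ True] Ca diff_diff_pm)
    have sU: "(\<Sum>w\<in>U. g w) = 0" unfolding g_def by (rule syz_at[OF fin s\<tau>])
    have nz: "mle w b \<and> mdeg b = Suc d" if "w \<in> U" "g w \<noteq> 0" for w
    proof -
      have wb: "mle w b" using that unfolding g_def by (auto split: if_splits)
      then have "b - w \<in> Poly_Mapping.keys (\<tau> w)" using that unfolding g_def by (simp add: in_keys_iff)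
      then have "mdeg (b - w) = 1" by (rule k\<tau>)
      then show ?thesis using wb mdeg_add[of "b - w" w] deg that by (simp add: mle_diff_add)
    qed
    show ?thesis
    proof (cases "\<exists>w0\<in>C. g w0 \<noteq> 0")
      case True
      then obtain w0 where w0: "w0 \<in> C" "g w0 \<noteq> 0" by blast
      have "w \<in> C" if "w \<in> U" "g w \<noteq> 0" for w
      proof -
        have w0U: "w0 \<in> U" using CU w0 by blast
        have "adj U d a w0 w"
          unfolding adj_def using w0U that nz[OF w0U w0(2)] nz[OF that] ba mle_trans[of w b a] Ca w0(1) by blast
        then show ?thesis using clos w0 by blast
      qed
      then have "(\<Sum>w\<in>C. g w) = (\<Sum>w\<in>U. g w)"
        by (intro sum.mono_neutral_left fin CU) auto
      then show ?thesis using fg sU by simp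
    next
      case False
      then show ?thesis using fg by simp
    qed
  qed
  have "(\<Sum>w\<in>C. Poly_Mapping.lookup (p * \<tau> w) (a - w))
      = (\<Sum>w\<in>C. \<Sum>m\<in>Poly_Mapping.keys p. Poly_Mapping.lookup (Poly_Mapping.single m (Poly_Mapping.lookup p m) * \<tau> w) (a - w))"
    by (subst poly_expand[of p]) (simp add: sum_distrib_right lookup_sum)
  also have "\<dots> = (\<Sum>m\<in>Poly_Mapping.keys p. \<Sum>w\<in>C. Poly_Mapping.lookup (Poly_Mapping.single m (Poly_Mapping.lookup p m) * \<tau> w) (a - w))"
    by (rule sum.swap)
  also have "\<dots> = (\<Sum>m\<in>Poly_Mapping.keys p. Poly_Mapping.lookup p m *
        (\<Sum>w\<in>C. (if mle m (a - w) then Poly_Mapping.lookup (\<tau> w) (a - w - m) else 0)))"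
    by (simp add: lookup_single_mult sum_distrib_left if_distrib cong: if_cong)
  also have "\<dots> = 0" by (simp add: inner)
  finally show ?thesis .
qed

lemma nec:
  fixes U :: "('a::finite \<Rightarrow>\<^sub>0 nat) set"
  assumes fin: "finite U" and deg: "\<forall>u\<in>U. mdeg u = d"
    and lr: "(syzygies U :: (_ \<Rightarrow> ('a,'k::field) poly) set) \<subseteq> LinC U"
    and uv: "u \<in> U" "v \<in> U" "mle u a" "mle v a"
  shows "(adj U d a)\<^sup>*\<^sup>* u v"
proof (rule ccontr)
  assume nv: "\<not> (adj U d a)\<^sup>*\<^sup>* u v"
  define C where "C = {w. (adj U d a)\<^sup>*\<^sup>* u w}"
  have CU0: "w \<in> U \<and> mle w a" if "(adj U d a)\<^sup>*\<^sup>* u w" for w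
    using that by (induction rule: rtranclp_induct) (use uv in \<open>auto simp: adj_def\<close>)
  have CU: "w \<in> U \<and> mle w a" if "w \<in> C" for w
    using that CU0 unfolding C_def by blast
  have clos: "\<forall>w\<in>C. \<forall>w'. adj U d a w w' \<longrightarrow> w' \<in> C"
    unfolding C_def by (auto intro: rtranclp.rtrancl_into_rtrancl)
  have uC: "u \<in> C" unfolding C_def by simp
  have vC: "v \<notin> C" using nv unfolding C_def by simp
  have finC: "finite C" using fin CU finite_subset[of C U] by blast
  define \<sigma> where "\<sigma> = (Dv a u v :: _ \<Rightarrow> ('a,'k) poly)"
  have "\<sigma> \<in> syzygies U"
  proof -
    have "(\<Sum>w\<in>U. \<sigma> w * monom w) = (\<Sum>w\<in>U. (if w = u then monom (a - u) * monom w else 0)) - (\<Sum>w\<in>U. (if w = v then monom (a - v) * monom w else 0))"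
      by (subst sum_subtractf[symmetric], rule sum.cong) (auto simp: \<sigma>_def Dv_def)
    also have "\<dots> = 0" using fin uv by (simp add: sum.delta monom_mult mle_diff_add)
    finally show ?thesis unfolding syzygies_def using uv by (auto simp: \<sigma>_def Dv_def)
  qed
  then have "\<sigma> \<in> LinC U" using lr by blast
  then obtain n :: nat and c \<tau> where 1: "\<forall>i<n. \<tau> i \<in> linear_syzygies U" "\<forall>w. \<sigma> w = (\<Sum>i<n. c i * \<tau> i w)"
    unfolding LinC_def mem_Collect_eq by blast
  have "(\<Sum>w\<in>C. Poly_Mapping.lookup (\<sigma> w) (a - w)) = (\<Sum>w\<in>C. \<Sum>i<n. Poly_Mapping.lookup (c i * \<tau> i w) (a - w))"
    using 1(2) by (simp add: lookup_sum)
  also have "\<dots> = (\<Sum>i<n. \<Sum>w\<in>C. Poly_Mapping.lookup (c i * \<tau> i w) (a - w))" by (rule sum.swap)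
  also have "\<dots> = 0"
    by (rule sum.neutral) (use kill[OF fin deg _ _ _ clos] 1(1) CU in blast)
  finally have z: "(\<Sum>w\<in>C. Poly_Mapping.lookup (\<sigma> w) (a - w)) = 0" .
  have "(\<Sum>w\<in>C. Poly_Mapping.lookup (\<sigma> w) (a - w)) = (\<Sum>w\<in>C. (if w = u then 1 else 0))"
    by (rule sum.cong) (use vC in \<open>auto simp: \<sigma>_def Dv_def monom_def\<close>)
  also have "\<dots> = 1" using finC uC by simp
  finally show False using z by simp
qed



definition Fk :: "'a set set \<Rightarrow> nat \<Rightarrow> 'a set set" where
  "Fk E k = {\<Union>M | M. matching E M \<and> card M = k}"

definition setadj :: "'a set set \<Rightarrow> nat \<Rightarrow> 'a set \<Rightarrow> 'a set \<Rightarrow> 'a set \<Rightarrow> bool" where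
  "setadj E k Z X Y \<longleftrightarrow> X \<in> Fk E k \<and> Y \<in> Fk E k \<and> X \<subseteq> Z \<and> Y \<subseteq> Z \<and> card (X \<union> Y) \<le> Suc (2 * k)"

definition Conn :: "'a set set \<Rightarrow> nat \<Rightarrow> bool" where
  "Conn E k \<longleftrightarrow> (\<forall>S\<in>Fk E k. \<forall>T\<in>Fk E k. (setadj E k (S \<union> T))\<^sup>*\<^sup>* S T)"

lemma matching_finite: "simple_graph E \<Longrightarrow> matching E M \<Longrightarrow> finite M"
  unfolding simple_graph_def matching_def using finite_subset by blast

lemma matching_card_Union:
  fixes E :: "('a::finite) set set"
  assumes "simple_graph E" "matching E M" shows "card (\<Union>M) = 2 * card M"
proof -
  have "card (\<Union>M) = sum card M"
    by (rule card_Union_disjoint) (use assms in \<open>auto simp: matching_def pairwise_def disjnt_def\<close>)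
  also have "\<dots> = sum (\<lambda>_. 2) M"
    by (rule sum.cong) (use assms in \<open>auto simp: matching_def simple_graph_def\<close>)
  finally show ?thesis by simp
qed

lemma Fk_card: "simple_graph E \<Longrightarrow> X \<in> Fk E k \<Longrightarrow> card X = 2 * k" for E :: "('a::finite) set set"
  unfolding Fk_def using matching_card_Union by blast

lemma matching_del:
  assumes "matching E M" "g \<in> M"
  shows "matching E (M - {g}) \<and> \<Union>(M - {g}) = \<Union>M - g"
  using assms unfolding matching_def by blast

lemma edge_nonempty: "simple_graph E \<Longrightarrow> g \<in> E \<Longrightarrow> g \<noteq> {}"
  unfolding simple_graph_def by fastforce

lemma matching_ins:
  assumes "simple_graph E" "matching E M" "g \<in> E" "g \<inter> \<Union>M = {}"
  shows "matching E (insert g M) \<and> g \<notin> M \<and> \<Union>(insert g M) = g \<union> \<Union>M"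
proof -
  have "g \<noteq> {}" using edge_nonempty assms by blast
  then have "g \<notin> M" using assms(4) by blast
  then show ?thesis using assms unfolding matching_def by blast
qed

lemma Fk_del:
  assumes "simple_graph E" "matching E M" "g \<in> M" "card M = Suc k"
  shows "\<Union>M - g \<in> Fk E k"
proof -
  have "card (M - {g}) = k" using assms matching_finite by (simp add: card_Diff_singleton)
  then show ?thesis using matching_del[OF assms(2,3)] unfolding Fk_def mem_Collect_eq
    by (intro exI[of _ "M - {g}"]) simp
qed

lemma Fk_ins:
  assumes "simple_graph E" "X \<in> Fk E k" "g \<in> E" "g \<inter> X = {}"
  shows "X \<union> g \<in> Fk E (Suc k)"
proof -
  obtain M where M: "matching E M" "card M = k" "X = \<Union>M" using assms(2) unfolding Fk_def by blast
  have i: "matching E (insert g M) \<and> g \<notin> M \<and> \<Union>(insert g M) = g \<union> \<Union>M"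
    by (rule matching_ins) (use assms M in auto)
  have "card (insert g M) = Suc k" using i M matching_finite[OF assms(1)] by simp
  then show ?thesis using i M unfolding Fk_def mem_Collect_eq
    by (intro exI[of _ "insert g M"]) (simp add: Un_commute)
qed

lemma lift:
  fixes E :: "('a::finite) set set"
  assumes sg: "simple_graph E" and p: "(setadj E k Z)\<^sup>*\<^sup>* A B" and g: "g \<in> E" "g \<inter> Z = {}"
  shows "(setadj E (Suc k) (Z \<union> g))\<^sup>*\<^sup>* (A \<union> g) (B \<union> g)"
  using p
proof (induction rule: rtranclp_induct)
  case base then show ?case by simp
next
  case (step Y Y')
  have Y: "Y \<in> Fk E k" "Y' \<in> Fk E k" "Y \<subseteq> Z" "Y' \<subseteq> Z" "card (Y \<union> Y') \<le> Suc (2 * k)"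
    using step(2) unfolding setadj_def by auto
  have c2: "card g = 2" using sg g unfolding simple_graph_def by auto
  have "card ((Y \<union> g) \<union> (Y' \<union> g)) = card (Y \<union> Y') + card g"
  proof -
    have "(Y \<union> g) \<union> (Y' \<union> g) = (Y \<union> Y') \<union> g" by auto
    moreover have "(Y \<union> Y') \<inter> g = {}" using Y g by auto
    ultimately show ?thesis by (simp add: card_Un_disjoint)
  qed
  then have "setadj E (Suc k) (Z \<union> g) (Y \<union> g) (Y' \<union> g)"
    unfolding setadj_def using Y c2 Fk_ins[OF sg Y(1) g(1)] Fk_ins[OF sg Y(2) g(1)] g by auto
  then show ?case by (rule rtranclp.rtrancl_into_rtrancl[OF step(3)])
qed

lemma setadj_mono: "(setadj E k Z)\<^sup>*\<^sup>* A B \<Longrightarrow> Z \<subseteq> Z' \<Longrightarrow> (setadj E k Z')\<^sup>*\<^sup>* A B"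
  by (erule rtranclp_mono[THEN predicate2D, rotated]) (unfold setadj_def, blast)

lemma comb:
  fixes E :: "('a::finite) set set"
  assumes sg: "simple_graph E" and k: "1 \<le> k" and C: "Conn E k"
  shows "Conn E (Suc k)"
  unfolding Conn_def
proof (intro ballI)
  fix S T assume S: "S \<in> Fk E (Suc k)" and T: "T \<in> Fk E (Suc k)"
  obtain M where M: "matching E M" "card M = Suc k" "S = \<Union>M" using S unfolding Fk_def by blast
  obtain N where N: "matching E N" "card N = Suc k" "T = \<Union>N" using T unfolding Fk_def by blast
  show "(setadj E (Suc k) (S \<union> T))\<^sup>*\<^sup>* S T"
  proof (cases "S = T")
    case True then show ?thesis by simp
  next
    case False
    obtain e where e: "e \<in> M" "\<not> e \<subseteq> T"
    proof -
      have "\<not> S \<subseteq> T"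
      proof
        assume "S \<subseteq> T"
        moreover have "card S = card T" using Fk_card[OF sg S] Fk_card[OF sg T] by simp
        ultimately have "S = T" by (intro card_subset_eq) auto
        then show False using False by simp
      qed
      then show ?thesis using that M(3) by blast
    qed
    have eE: "e \<in> E" using e M unfolding matching_def by blast
    have ce: "card e = 2" using eE sg unfolding simple_graph_def by auto
    have Nne: "N \<noteq> {}" using N(2) by auto
    obtain f where f: "f \<in> N" "e \<inter> T \<subseteq> f"
    proof (cases "e \<inter> T = {}")
      case True then show ?thesis using that Nne by blast
    next
      case False
      then obtain p where p: "p \<in> e" "p \<in> T" by blast
      then obtain f where f: "f \<in> N" "p \<in> f" using N(3) by blast
      have "e \<inter> T \<subseteq> f"
      proof
        fix q assume q: "q \<in> e \<inter> T"
        show "q \<in> f"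
        proof (cases "q = p")
          case True then show ?thesis using f by simp
        next
          case False
          have "e = {p, q}"
          proof -
            obtain x y where xy: "e = {x, y}" "x \<noteq> y" using card_2_iff[THEN iffD1, OF ce] by blast
            have "p \<in> {x, y}" "q \<in> {x, y}" using p q xy by auto
            then show ?thesis using xy False by auto
          qed
          then have "e \<subseteq> T" using p q by blast
          then show ?thesis using e by simp
        qed
      qed
      then show ?thesis using that f by blast
    qed
    have eTf: "e \<inter> (T - f) = {}" using f by blast
    define A where "A = S - e"
    define B where "B = T - f"
    have A: "A \<in> Fk E k" unfolding A_def M(3) by (rule Fk_del[OF sg M(1) e(1) M(2)])
    have B: "B \<in> Fk E k" unfolding B_def N(3) by (rule Fk_del[OF sg N(1) f(1) N(2)])
    have p1: "(setadj E k (A \<union> B))\<^sup>*\<^sup>* A B" using C A B unfolding Conn_def by blast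
    have p1': "(setadj E (Suc k) ((A \<union> B) \<union> e))\<^sup>*\<^sup>* (A \<union> e) (B \<union> e)"
      by (rule lift[OF sg p1 eE]) (use eTf in \<open>auto simp: A_def B_def\<close>)
    have Ae: "A \<union> e = S" unfolding A_def using e M(3) by blast
    have sub1: "(A \<union> B) \<union> e \<subseteq> S \<union> T" unfolding A_def B_def using e M(3) by blast
    have P1: "(setadj E (Suc k) (S \<union> T))\<^sup>*\<^sup>* S (B \<union> e)"
      using setadj_mono[OF p1' sub1] Ae by simp
    define X where "X = B \<union> e"
    define Nx where "Nx = insert e (N - {f})"
    have Nd: "matching E (N - {f}) \<and> \<Union>(N - {f}) = \<Union>N - f" by (rule matching_del[OF N(1) f(1)])
    have Nxi: "matching E Nx \<and> e \<notin> N - {f} \<and> \<Union>Nx = e \<union> \<Union>(N - {f})"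
      unfolding Nx_def by (rule matching_ins[OF sg _ eE]) (use Nd eTf N(3) in auto)
    have cNx: "card Nx = Suc k"
      using Nxi N matching_finite[OF sg N(1)] f(1) unfolding Nx_def by (simp add: card_Diff_singleton)
    have UNx: "\<Union>Nx = X" using Nxi Nd N(3) unfolding X_def B_def by blast
    obtain g where g: "g \<in> N" "g \<noteq> f"
    proof -
      have "card (N - {f}) = k" using N f(1) matching_finite[OF sg N(1)] by (simp add: card_Diff_singleton)
      then have "N - {f} \<noteq> {}" using k by (intro notI) simp
      then show ?thesis using that by blast
    qed
    have gNx: "g \<in> Nx" unfolding Nx_def using g by blast
    have gE: "g \<in> E" using g N(1) unfolding matching_def by blast
    define A' where "A' = X - g"
    define B' where "B' = T - g"
    have A': "A' \<in> Fk E k" unfolding A'_def UNx[symmetric] by (rule Fk_del[OF sg _ gNx cNx]) (use Nxi in auto)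
    have B': "B' \<in> Fk E k" unfolding B'_def N(3) by (rule Fk_del[OF sg N(1) g(1) N(2)])
    have p2: "(setadj E k (A' \<union> B'))\<^sup>*\<^sup>* A' B'" using C A' B' unfolding Conn_def by blast
    have p2': "(setadj E (Suc k) ((A' \<union> B') \<union> g))\<^sup>*\<^sup>* (A' \<union> g) (B' \<union> g)"
      by (rule lift[OF sg p2 gE]) (auto simp: A'_def B'_def)
    have gX: "g \<subseteq> X" using UNx gNx by blast
    have gT: "g \<subseteq> T" using N(3) g by blast
    have XST: "X \<subseteq> S \<union> T" unfolding X_def B_def using e M(3) by blast
    have P2: "(setadj E (Suc k) (S \<union> T))\<^sup>*\<^sup>* X T"
    proof -
      have eq: "A' \<union> g = X" "B' \<union> g = T" using gX gT unfolding A'_def B'_def by blast+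
      have "(A' \<union> B') \<union> g \<subseteq> S \<union> T" using XST gT unfolding A'_def B'_def by blast
      then have "(setadj E (Suc k) (S \<union> T))\<^sup>*\<^sup>* (A' \<union> g) (B' \<union> g)" by (rule setadj_mono[OF p2'])
      then show ?thesis unfolding eq .
    qed
    show ?thesis using P1 P2 unfolding X_def by (rule rtranclp_trans)
  qed
qed



lemma lookup_vexp: "Poly_Mapping.lookup (vexp (A::('a::finite) set)) x = (if x \<in> A then 1 else 0)"
  unfolding vexp_def by (simp add: lookup_sum lookup_single when_def)

lemma vexp_inj: "vexp (A::('a::finite) set) = vexp B \<Longrightarrow> A = B"
  by (metis lookup_vexp one_neq_zero subsetI subset_antisym)

lemma mdeg_vexp: "mdeg (vexp (A::('a::finite) set)) = card A"
  by (simp add: mdeg_univ lookup_vexp sum.If_cases)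

lemma mle_vexp: "mle (vexp (A::('a::finite) set)) m \<longleftrightarrow> (\<forall>x\<in>A. 1 \<le> Poly_Mapping.lookup m x)"
  unfolding mle_def lookup_vexp by auto

lemma vexp_matching:
  fixes E :: "('a::finite) set set"
  assumes "simple_graph E" "matching E M"
  shows "(\<Sum>e\<in>M. vexp e) = vexp (\<Union>M)"
proof -
  have "vexp (\<Union>M) = (\<Sum>e\<in>M. \<Sum>x\<in>e. Poly_Mapping.single x (1::nat))"
    unfolding vexp_def
    by (subst sum.Union_disjoint) (use assms in \<open>auto simp: matching_def\<close>)
  then show ?thesis by (simp add: vexp_def)
qed

lemma gens_eq:
  fixes E :: "('a::finite) set set"
  assumes "simple_graph E" shows "sqf_power_gens E k = vexp ` Fk E k"
proof (rule set_eqI, rule iffI)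
  fix x assume "x \<in> sqf_power_gens E k"
  then obtain M where "matching E M" "card M = k" "x = (\<Sum>e\<in>M. vexp e)" unfolding sqf_power_gens_def by blast
  then show "x \<in> vexp ` Fk E k" unfolding Fk_def using vexp_matching[OF assms] by auto
next
  fix x assume "x \<in> vexp ` Fk E k"
  then obtain M where M: "matching E M" "card M = k" "x = vexp (\<Union>M)" unfolding Fk_def by blast
  then have "x = (\<Sum>e\<in>M. vexp e)" using vexp_matching[OF assms M(1)] by simp
  then show "x \<in> sqf_power_gens E k" unfolding sqf_power_gens_def using M by blast
qed

lemma finite_gens: "finite (vexp ` Fk (E::('a::finite) set set) k)"
  by simp

lemma nec2set:
  fixes E :: "('a::finite) set set"
  assumes sg: "simple_graph E" and S: "S \<in> Fk E k" and T: "T \<in> Fk E k"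
    and p: "(adj (vexp ` Fk E k) (2 * k) (vexp S + vexp T))\<^sup>*\<^sup>* (vexp S) (vexp T)"
  shows "(setadj E k (S \<union> T))\<^sup>*\<^sup>* S T"
proof -
  have "\<exists>W. w = vexp W \<and> (setadj E k (S \<union> T))\<^sup>*\<^sup>* S W"
    if "(adj (vexp ` Fk E k) (2 * k) (vexp S + vexp T))\<^sup>*\<^sup>* (vexp S) w" for w
    using that
  proof (induction rule: rtranclp_induct)
    case base then show ?case by blast
  next
    case (step y z)
    obtain W where W: "y = vexp W" "(setadj E k (S \<union> T))\<^sup>*\<^sup>* S W" using step(3) by blast
    have a: "y \<in> vexp ` Fk E k" "z \<in> vexp ` Fk E k" "mle y (vexp S + vexp T)" "mle z (vexp S + vexp T)"
      and o: "y = z \<or> (\<exists>b. mle b (vexp S + vexp T) \<and> mdeg b = Suc (2 * k) \<and> mle y b \<and> mle z b)"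
      using step(2) unfolding adj_def by auto
    obtain W' where W': "W' \<in> Fk E k" "z = vexp W'" using a(2) by blast
    have WF: "W \<in> Fk E k" using a(1) W(1) vexp_inj by blast
    have sub: "X \<subseteq> S \<union> T" if "mle (vexp X) (vexp S + vexp T)" for X
      using that unfolding mle_vexp by (auto simp: lookup_add lookup_vexp split: if_splits)
    have cu: "card (W \<union> W') \<le> Suc (2 * k)"
    proof (cases "y = z")
      case True
      then have "W = W'" using W W' vexp_inj by simp
      then show ?thesis using Fk_card[OF sg W'(1)] by simp
    next
      case False
      then obtain b where b: "mdeg b = Suc (2 * k)" "mle y b" "mle z b" using o by blast
      have "mle (vexp W) b" "mle (vexp W') b" using b W(1) W'(2) by auto
      then have "mle (vexp (W \<union> W')) b" unfolding mle_vexp by auto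
      then show ?thesis using mdeg_mono b(1) mdeg_vexp by metis
    qed
    have "setadj E k (S \<union> T) W W'"
      unfolding setadj_def using WF W' sub a(3,4) W(1) cu by auto
    then have "(setadj E k (S \<union> T))\<^sup>*\<^sup>* S W'" by (rule rtranclp.rtrancl_into_rtrancl[OF W(2)])
    then show ?case using W'(2) by blast
  qed
  from this[OF p] show ?thesis using vexp_inj by blast
qed

lemma set2suff:
  fixes E :: "('a::finite) set set"
  assumes sg: "simple_graph E" and p: "(setadj E j (S \<union> T))\<^sup>*\<^sup>* S T"
    and c: "mle (vexp S) c" "mle (vexp T) c"
  shows "(adj (vexp ` Fk E j) (2 * j) c)\<^sup>*\<^sup>* (vexp S) (vexp T)"
  using p
proof (induction rule: rtranclp_induct)
  case base then show ?case by simp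
next
  case (step Y Y')
  have Y: "Y \<in> Fk E j" "Y' \<in> Fk E j" "Y \<subseteq> S \<union> T" "Y' \<subseteq> S \<union> T" "card (Y \<union> Y') \<le> Suc (2 * j)"
    using step(2) unfolding setadj_def by auto
  have cm: "mle (vexp X) c" if "X \<subseteq> S \<union> T" for X
    using that c unfolding mle_vexp by blast
  have "adj (vexp ` Fk E j) (2 * j) c (vexp Y) (vexp Y')"
  proof (cases "Y = Y'")
    case True then show ?thesis unfolding adj_def using Y cm by auto
  next
    case False
    have cY: "card Y = 2 * j" "card Y' = 2 * j" using Fk_card[OF sg] Y by auto
    have "Y \<subset> Y \<union> Y'"
    proof -
      have "\<not> Y' \<subseteq> Y"
      proof
        assume "Y' \<subseteq> Y"
        then have "Y' = Y" using cY by (intro card_subset_eq) auto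
        then show False using False by simp
      qed
      then show ?thesis by blast
    qed
    then have "card Y < card (Y \<union> Y')" by (intro psubset_card_mono) auto
    then have cu: "card (Y \<union> Y') = Suc (2 * j)" using Y(5) cY by simp
    have "mle (vexp (Y \<union> Y')) c" "mdeg (vexp (Y \<union> Y')) = Suc (2 * j)"
      "mle (vexp Y) (vexp (Y \<union> Y'))" "mle (vexp Y') (vexp (Y \<union> Y'))"
      using cm[of "Y \<union> Y'"] Y cu by (auto simp: mdeg_vexp mle_vexp lookup_vexp)
    then show ?thesis unfolding adj_def using Y cm by blast
  qed
  then show ?case by (rule rtranclp.rtrancl_into_rtrancl[OF step(3)])
qed

theorem theorem3p1:
  fixes E :: "('a::finite) set set" and k :: nat
  assumes "simple_graph E"
    and "1 \<le> k" and "k < matching_number E"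
    and "linearly_related (sqf_power_gens E k) TYPE('k::field)"
  shows "linearly_related (sqf_power_gens E (Suc k)) TYPE('k::field)"
proof -
  note sg = assms(1)
  have lr: "(syzygies (vexp ` Fk E k) :: (_ \<Rightarrow> ('a,'k) poly) set) \<subseteq> LinC (vexp ` Fk E k)"
    using assms(4) unfolding gens_eq[OF sg] lr_iff .
  have degk: "\<forall>u\<in>vexp ` Fk E k. mdeg u = 2 * k" using Fk_card[OF sg] by (auto simp: mdeg_vexp)
  have Ck: "Conn E k" unfolding Conn_def
  proof (intro ballI)
    fix S T assume S: "S \<in> Fk E k" and T: "T \<in> Fk E k"
    have "(adj (vexp ` Fk E k) (2 * k) (vexp S + vexp T))\<^sup>*\<^sup>* (vexp S) (vexp T)"
      by (rule nec[OF finite_gens degk lr]) (use S T in \<open>auto simp: mle_def lookup_add\<close>)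
    then show "(setadj E k (S \<union> T))\<^sup>*\<^sup>* S T" by (rule nec2set[OF sg S T])
  qed
  have Ck1: "Conn E (Suc k)" by (rule comb[OF sg assms(2) Ck])
  have degk1: "\<forall>u\<in>vexp ` Fk E (Suc k). mdeg u = 2 * Suc k" using Fk_card[OF sg] by (auto simp: mdeg_vexp)
  have "(syzygies (vexp ` Fk E (Suc k)) :: (_ \<Rightarrow> ('a,'k) poly) set) \<subseteq> LinC (vexp ` Fk E (Suc k))"
  proof (rule suff[OF finite_gens degk1])
    fix u v c assume u: "u \<in> vexp ` Fk E (Suc k)" and v: "v \<in> vexp ` Fk E (Suc k)"
      and uc: "mle u c" and vc: "mle v c"
    obtain S T where S: "S \<in> Fk E (Suc k)" "u = vexp S" and T: "T \<in> Fk E (Suc k)" "v = vexp T"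
      using u v by blast
    have p: "(setadj E (Suc k) (S \<union> T))\<^sup>*\<^sup>* S T" using Ck1 S T unfolding Conn_def by blast
    show "(adj (vexp ` Fk E (Suc k)) (2 * Suc k) c)\<^sup>*\<^sup>* u v"
      unfolding S(2) T(2) by (rule set2suff[OF sg p uc[unfolded S(2)] vc[unfolded T(2)]])
  qed
  then show ?thesis unfolding gens_eq[OF sg] lr_iff .
qed


end
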